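(* In the setting of the context, the map $\mathscr H$ defined on $\mathscr P_1^C$ by \[ (\mathscr H\eta)_{r'}=\sum_{r\in C}\frac{\pi_rQ_{r,r'}}{\pi_{r'}}(f_r)_*\eta_r\qquad(r'\in C) \] maps $\mathscr P_1^C$ into $\mathscr P_1^C$ and satisfies $\mathcal W(\mathscr H\eta,\mathscr H\zeta)\le\rho\,\mathcal W(\eta,\zeta)$ for all $\eta,\zeta\in\mathscr P_1^C$.
   Context: Setting (construction of the paper): $X$ finite, $P$ irreducible row-stochastic, $\Sigma=\{x\in X^{\mathbb N_0}:P_{x_nx_{n+1}}>0\}$, $\{A_i\}_{i\in X}\subset\mathrm{GL}_2(\mathbb R)$ projectively uniformly hyperbolic w.r.t. $\Sigma$ (on $\widehat\Sigma=\{(x_n)_{n\in\mathbb Z}:P_{x_nx_{n+1}}>0\}$ there is a continuous invariant splitting $\mathbb R^2=E^d\oplus E^w$ into lines, $A_{x_0}E^*(\hat x)=E^*(\widehat\sigma\hat x)$, with $\|A_{x_{n-1}}\cdots A_{x_0}|_{E^w}\|<\|A_{x_{n-1}}\cdots A_{x_0}|_{E^d}\|$ for some $n$). A multicone $\{M_i\}$ is fixed (non-empty proper finite unions of open intervals in $\mathbb{RP}^1$, $\overline{[A_j](M_i)}\subset M_j$ when $P_{ij}>0$), with components $M_{i,a}$; $\beta(i,a,j)$ the unique $b$ with $[A_j](\overline{M_{i,a}})\subset M_{j,b}$; $R=\{((i,a),(j,b)):P_{ij}>0,\ b=\beta(i,a,j)\}$, $s(r)=(i,a)$, $t(r)=(j,b)$,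 $\tau(r)=j$; $Q_{r,r'}=P_{\tau(r)\tau(r')}$ if $t(r)=s(r')$ else $0$; $C$ a fixed recurrent class. $L_{i,a}\in\mathrm{GL}_2(\mathbb R)$ maps the projective non-negative cone onto $\overline{M_{i,a}}$; $B_r=\pm L_{t(r)}^{-1}A_{\tau(r)}L_{s(r)}$, sign chosen so $B_r$ is entrywise positive. If the period $d$ of $Q|_C$ exceeds $1$, $C,Q,B$ are replaced by the $d$-step system on words $(c_0,\dots,c_{d-1})$ through the cyclic classes ($Q_{c,c'}=Q_{c_{d-1}c'_0}Q_{c'_0c'_1}\cdots Q_{c'_{d-2}c'_{d-1}}$, $B_c=B_{c_{d-1}}\cdots B_{c_0}$), keeping names; then $Q|_C$ is irreducible and aperiodic with stationary vector $\pi$, $\pi_r>0$. For $B_r=\begin{pmatrix}a_r&b_r\\c_r&d_r\end{pmatrix}$, $f_r(x)=\frac{(a_r-b_r-c_r+d_r)x+(a_r+b_r-c_r-d_r)}{(a_r-b_r+c_r-d_r)x+(a_r+b_r+c_r+d_r)}$, and $0<\rho<1$ is fixed with $f_r([-1,1])\subset[-\rho,\rho]$ for all $r\in C$. Metrics: $d_{\mathrm{hyp}}(x,y)=2|\mathrm{artanh}\,x-\mathrm{artanh}\,y|$ on $(-1,1)$; $\mathscr P_1(-1,1)$ is the set of Borel probability measures $\nu$ on $(-1,1)$ with $\int d_{\mathrm{hyp}}(x,0)\,d\nu<\infty$; $W_1(\nu_1,\nu_2)=\inf_\eta\int d_{\mathrm{hyp}}(x,y)\,d\eta(x,y)$ over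 couplings $\eta$ of $\nu_1,\nu_2$; $\mathscr P_1^C=\prod_{r\in C}\mathscr P_1(-1,1)$ with metric $\mathcal W(\eta,\zeta)=\sum_{r\in C}\pi_rW_1(\eta_r,\zeta_r)$. *)

theory Defs
  imports "HOL-Probability.Probability"
begin

definition dhyp :: "real \<Rightarrow> real \<Rightarrow> real" where
  "dhyp x y = 2 * \<bar>artanh x - artanh y\<bar>"

definition Ihyp :: "real measure" where
  "Ihyp = restrict_space borel {-1<..<1}"

definition P1 :: "real measure set" where
  "P1 = {\<nu>. sets \<nu> = sets Ihyp \<and> prob_space \<nu> \<and>
              (\<integral>\<^sup>+ x. ennreal (dhyp x 0) \<partial>\<nu>) < \<infinity>}"

definition couplings :: "real measure \<Rightarrow> real measure \<Rightarrow> (real \<times> real) measure set" where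
  "couplings \<nu>1 \<nu>2 = {\<eta>. sets \<eta> = sets (Ihyp \<Otimes>\<^sub>M Ihyp) \<and> prob_space \<eta> \<and>
                          distr \<eta> Ihyp fst = \<nu>1 \<and> distr \<eta> Ihyp snd = \<nu>2}"

definition W1 :: "real measure \<Rightarrow> real measure \<Rightarrow> ennreal" where
  "W1 \<nu>1 \<nu>2 = (INF \<eta>\<in>couplings \<nu>1 \<nu>2. \<integral>\<^sup>+ p. ennreal (dhyp (fst p) (snd p)) \<partial>\<eta>)"

definition P1C :: "'r set \<Rightarrow> ('r \<Rightarrow> real measure) set" where
  "P1C C = Pi C (\<lambda>_. P1)"

definition WC :: "'r set \<Rightarrow> ('r \<Rightarrow> real) \<Rightarrow> ('r \<Rightarrow> real measure) \<Rightarrow> ('r \<Rightarrow> real measure) \<Rightarrow> ennreal" where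
  "WC C \<pi> \<eta> \<zeta> = (\<Sum>r\<in>C. ennreal (\<pi> r) * W1 (\<eta> r) (\<zeta> r))"

definition wsum_measure :: "'b measure \<Rightarrow> 'a set \<Rightarrow> ('a \<Rightarrow> real) \<Rightarrow> ('a \<Rightarrow> 'b measure) \<Rightarrow> 'b measure" where
  "wsum_measure S I w \<mu> =
     measure_of (space S) (sets S) (\<lambda>A. \<Sum>i\<in>I. ennreal (w i) * emeasure (\<mu> i) A)"

definition fmob :: "real^2^2 \<Rightarrow> real \<Rightarrow> real" where
  "fmob B x = (let a = B$1$1; b = B$1$2; c = B$2$1; d = B$2$2 in
      ((a - b - c + d) * x + (a + b - c - d)) / ((a - b + c - d) * x + (a + b + c + d)))"

fun qpow :: "'r set \<Rightarrow> ('r \<Rightarrow> 'r \<Rightarrow> real) \<Rightarrow> nat \<Rightarrow> 'r \<Rightarrow> 'r \<Rightarrow> real" where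
  "qpow C Q 0 r r' = (if r = r' then 1 else 0)"
| "qpow C Q (Suc n) r r' = (\<Sum>k\<in>C. qpow C Q n r k * Q k r')"

definition irreducible_on :: "'r set \<Rightarrow> ('r \<Rightarrow> 'r \<Rightarrow> real) \<Rightarrow> bool" where
  "irreducible_on C Q \<longleftrightarrow> (\<forall>r\<in>C. \<forall>r'\<in>C. \<exists>n>0. qpow C Q n r r' > 0)"

definition aperiodic_on :: "'r set \<Rightarrow> ('r \<Rightarrow> 'r \<Rightarrow> real) \<Rightarrow> bool" where
  "aperiodic_on C Q \<longleftrightarrow> (\<forall>r\<in>C. Gcd {n. n > 0 \<and> qpow C Q n r r > 0} = (1::nat))"

definition Hop :: "'r set \<Rightarrow> ('r \<Rightarrow> 'r \<Rightarrow> real) \<Rightarrow> ('r \<Rightarrow> real) \<Rightarrow> ('r \<Rightarrow> real \<Rightarrow> real)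
                   \<Rightarrow> ('r \<Rightarrow> real measure) \<Rightarrow> ('r \<Rightarrow> real measure)" where
  "Hop C Q \<pi> f \<eta> = (\<lambda>r'. wsum_measure Ihyp C (\<lambda>r. \<pi> r * Q r r' / \<pi> r') (\<lambda>r. distr (\<eta> r) Ihyp (f r)))"

end

theory Submission
  imports Defs
begin


lemma wsum_sets[simp]: "sets (wsum_measure S I w \<mu>) = sets S"
  unfolding wsum_measure_def by (simp add: sets.space_closed sets.sigma_sets_eq)

lemma wsum_space[simp]: "space (wsum_measure S I w \<mu>) = space S"
  unfolding wsum_measure_def by simp

lemma wsum_measurable[simp]: "measurable (wsum_measure S I w \<mu>) N = measurable S N"
  by (rule measurable_cong_sets) simp_all

lemma wsum_emeasure:
  assumes fin: "finite I" and sets: "\<And>i. i \<in> I \<Longrightarrow> sets (\<mu> i) = sets S" and A: "A \<in> sets S"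
  shows "emeasure (wsum_measure S I w \<mu>) A = (\<Sum>i\<in>I. ennreal (w i) * emeasure (\<mu> i) A)"
  unfolding wsum_measure_def
proof (rule emeasure_measure_of_sigma[OF sets.sigma_algebra_axioms _ _ A])
  show "positive (sets S) (\<lambda>A. \<Sum>i\<in>I. ennreal (w i) * emeasure (\<mu> i) A)"
    by (simp add: positive_def)
  show "countably_additive (sets S) (\<lambda>A. \<Sum>i\<in>I. ennreal (w i) * emeasure (\<mu> i) A)"
  proof (rule countably_additiveI)
    fix A :: "nat \<Rightarrow> _" assume A: "range A \<subseteq> sets S" "disjoint_family A" "\<Union> (range A) \<in> sets S"
    have "(\<Sum>n. \<Sum>i\<in>I. ennreal (w i) * emeasure (\<mu> i) (A n)) = (\<Sum>i\<in>I. \<Sum>n. ennreal (w i) * emeasure (\<mu> i) (A n))"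
      by (rule suminf_sum) auto
    also have "\<dots> = (\<Sum>i\<in>I. ennreal (w i) * emeasure (\<mu> i) (\<Union> (range A)))"
    proof (rule sum.cong[OF refl])
      fix i assume i: "i \<in> I"
      have "(\<Sum>n. ennreal (w i) * emeasure (\<mu> i) (A n)) = ennreal (w i) * (\<Sum>n. emeasure (\<mu> i) (A n))"
        by (rule ennreal_suminf_cmult)
      also have "(\<Sum>n. emeasure (\<mu> i) (A n)) = emeasure (\<mu> i) (\<Union> (range A))"
        using A sets[OF i] by (intro suminf_emeasure) auto
      finally show "(\<Sum>n. ennreal (w i) * emeasure (\<mu> i) (A n)) = ennreal (w i) * emeasure (\<mu> i) (\<Union> (range A))" .
    qed
    finally show "(\<Sum>n. \<Sum>i\<in>I. ennreal (w i) * emeasure (\<mu> i) (A n)) = (\<Sum>i\<in>I. ennreal (w i) * emeasure (\<mu> i) (\<Union> (range A)))" .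
  qed
qed

lemma wsum_nn_integral:
  assumes fin: "finite I" and sets: "\<And>i. i \<in> I \<Longrightarrow> sets (\<mu> i) = sets S" and f: "f \<in> borel_measurable S"
  shows "(\<integral>\<^sup>+x. f x \<partial>wsum_measure S I w \<mu>) = (\<Sum>i\<in>I. ennreal (w i) * (\<integral>\<^sup>+x. f x \<partial>\<mu> i))"
  using f
proof induction
  case (cong f g)
  have "(\<integral>\<^sup>+x. f x \<partial>wsum_measure S I w \<mu>) = (\<integral>\<^sup>+x. g x \<partial>wsum_measure S I w \<mu>)"
    by (rule nn_integral_cong) (simp add: cong.hyps)
  moreover have "\<And>i. i \<in> I \<Longrightarrow> (\<integral>\<^sup>+x. f x \<partial>\<mu> i) = (\<integral>\<^sup>+x. g x \<partial>\<mu> i)"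
    by (rule nn_integral_cong) (simp add: cong.hyps sets_eq_imp_space_eq[OF sets])
  ultimately show ?case using cong.IH by simp
next
  case (set A)
  then show ?case using sets by (simp add: wsum_emeasure[OF fin sets] )
next
  case (mult f c)
  have "(\<integral>\<^sup>+x. c * f x \<partial>wsum_measure S I w \<mu>) = c * (\<integral>\<^sup>+x. f x \<partial>wsum_measure S I w \<mu>)"
    using mult by (intro nn_integral_cmult) simp
  moreover have "\<And>i. i \<in> I \<Longrightarrow> (\<integral>\<^sup>+x. c * f x \<partial>\<mu> i) = c * (\<integral>\<^sup>+x. f x \<partial>\<mu> i)"
    using mult sets by (intro nn_integral_cmult) (simp add: measurable_def sets_eq_imp_space_eq[OF sets])
  ultimately show ?case using mult.IH
    by (simp add: sum_distrib_left mult.assoc mult.left_commute)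
next
  case (add f g)
  have "(\<integral>\<^sup>+x. g x + f x \<partial>wsum_measure S I w \<mu>) = (\<integral>\<^sup>+x. f x \<partial>wsum_measure S I w \<mu>) + (\<integral>\<^sup>+x. g x \<partial>wsum_measure S I w \<mu>)"
    using add by (subst add.commute, intro nn_integral_add) auto
  moreover have "\<And>i. i \<in> I \<Longrightarrow> (\<integral>\<^sup>+x. g x + f x \<partial>\<mu> i) = (\<integral>\<^sup>+x. f x \<partial>\<mu> i) + (\<integral>\<^sup>+x. g x \<partial>\<mu> i)"
    using add sets by (subst add.commute, intro nn_integral_add) (auto simp: measurable_def sets_eq_imp_space_eq[OF sets])
  ultimately show ?case using add.IH
    by (simp add: sum.distrib distrib_left)
next
  case (seq U)
  have mi: "\<And>i j. i \<in> I \<Longrightarrow> U j \<in> borel_measurable (\<mu> i)"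
    using seq sets by (simp add: measurable_def sets_eq_imp_space_eq[OF sets])
  have "(\<integral>\<^sup>+x. (SUP j. U j x) \<partial>wsum_measure S I w \<mu>) = (SUP j. \<integral>\<^sup>+x. U j x \<partial>wsum_measure S I w \<mu>)"
    using seq by (intro nn_integral_monotone_convergence_SUP) auto
  also have "\<dots> = (SUP j. \<Sum>i\<in>I. ennreal (w i) * (\<integral>\<^sup>+x. U j x \<partial>\<mu> i))"
    using seq.IH by simp
  also have "\<dots> = (\<Sum>i\<in>I. SUP j. ennreal (w i) * (\<integral>\<^sup>+x. U j x \<partial>\<mu> i))"
    by (rule ennreal_SUP_sum) (auto intro!: mult_left_mono nn_integral_mono simp: incseq_def le_funD[OF seq.hyps(3)[unfolded incseq_def, rule_format]])
  also have "\<dots> = (\<Sum>i\<in>I. ennreal (w i) * (\<integral>\<^sup>+x. (SUP j. U j x) \<partial>\<mu> i))"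
  proof (rule sum.cong[OF refl])
    fix i assume i: "i \<in> I"
    have "(\<integral>\<^sup>+x. (SUP j. U j x) \<partial>\<mu> i) = (SUP j. \<integral>\<^sup>+x. U j x \<partial>\<mu> i)"
      using seq mi[OF i] by (intro nn_integral_monotone_convergence_SUP) auto
    then show "(SUP j. ennreal (w i) * (\<integral>\<^sup>+x. U j x \<partial>\<mu> i)) = ennreal (w i) * (\<integral>\<^sup>+x. (SUP j. U j x) \<partial>\<mu> i)"
      by (simp add: SUP_mult_left_ennreal)
  qed
  finally show ?case by (simp add: image_comp)
qed



lemma sq_le: "x * x \<le> y * y \<Longrightarrow> 0 \<le> y \<Longrightarrow> x \<le> (y::real)"
  by (metis power2_eq_square power2_le_imp_le)

lemma key_ineq0:
  fixes a b c d \<rho> :: real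
  assumes pos: "a > 0" "b > 0" "c > 0" "d > 0" and r: "0 < \<rho>" "\<rho> < 1"
    and h1: "\<bar>a - c\<bar> \<le> \<rho> * (a + c)" and h2: "\<bar>b - d\<bar> \<le> \<rho> * (b + d)"
  shows "\<bar>a * d - b * c\<bar> \<le> \<rho> * ((a + b) * (c + d))"
proof -
  define p where "p = sqrt (a * d)"
  define q where "q = sqrt (b * c)"
  have p0: "p \<ge> 0" and q0: "q \<ge> 0" using pos by (auto simp: p_def q_def)
  have pp: "p * p = a * d" using pos by (simp add: p_def)
  have qq: "q * q = b * c" using pos by (simp add: q_def)
  have amgm: "a * c + b * d \<ge> 2 * (p * q)"
  proof -
    have "(p * q) * (p * q) = (a * c) * (b * d)" using pp qq by (simp add: algebra_simps)
    hence "(a * c + b * d) * (a * c + b * d) - (2 * (p * q)) * (2 * (p * q)) = (a * c - b * d) * (a * c - b * d)"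
      by (simp add: algebra_simps)
    hence "(2 * (p * q)) * (2 * (p * q)) \<le> (a * c + b * d) * (a * c + b * d)"
      by (smt (verit) zero_le_square)
    moreover have "a * c + b * d \<ge> 0" using pos by simp
    ultimately show ?thesis using sq_le[of "2 * (p * q)" "a * c + b * d"] by simp
  qed
  have big: "(p + q) * (p + q) \<le> (a + b) * (c + d)"
    using amgm pp qq by (simp add: algebra_simps)
  have c1: "(1 - \<rho>) * a \<le> (1 + \<rho>) * c" and c2: "(1 - \<rho>) * c \<le> (1 + \<rho>) * a"
    using h1 by (auto simp: abs_le_iff algebra_simps)
  have c3: "(1 - \<rho>) * d \<le> (1 + \<rho>) * b" and c4: "(1 - \<rho>) * b \<le> (1 + \<rho>) * d"
    using h2 by (auto simp: abs_le_iff algebra_simps)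
  have m1: "((1 - \<rho>) * p) * ((1 - \<rho>) * p) \<le> ((1 + \<rho>) * q) * ((1 + \<rho>) * q)"
  proof -
    have "((1 - \<rho>) * a) * ((1 - \<rho>) * d) \<le> ((1 + \<rho>) * c) * ((1 + \<rho>) * b)"
      by (rule mult_mono[OF c1 c3]; use pos r in simp)
    thus ?thesis using pp qq by (simp add: algebra_simps)
  qed
  have m2: "((1 - \<rho>) * q) * ((1 - \<rho>) * q) \<le> ((1 + \<rho>) * p) * ((1 + \<rho>) * p)"
  proof -
    have "((1 - \<rho>) * c) * ((1 - \<rho>) * b) \<le> ((1 + \<rho>) * a) * ((1 + \<rho>) * d)"
      by (rule mult_mono[OF c2 c4]; use pos r in simp)
    thus ?thesis using pp qq by (simp add: algebra_simps)
  qed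
  have n1: "(1 - \<rho>) * p \<le> (1 + \<rho>) * q"
    using m1 p0 q0 r sq_le[of "(1 - \<rho>) * p" "(1 + \<rho>) * q"] by simp
  have n2: "(1 - \<rho>) * q \<le> (1 + \<rho>) * p"
    using m2 p0 q0 r sq_le[of "(1 - \<rho>) * q" "(1 + \<rho>) * p"] by simp
  have pq: "\<bar>p - q\<bar> \<le> \<rho> * (p + q)" using n1 n2 by (auto simp: abs_le_iff algebra_simps)
  have e: "(p - q) * (p + q) = a * d - b * c" using pp qq by (simp add: algebra_simps)
  have "\<bar>a * d - b * c\<bar> = \<bar>p - q\<bar> * (p + q)"
    using p0 q0 by (simp add: abs_mult flip: e)
  also have "\<dots> \<le> \<rho> * (p + q) * (p + q)" using pq p0 q0 by (intro mult_right_mono) auto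
  also have "\<dots> \<le> \<rho> * ((a + b) * (c + d))" using big r by (simp add: mult.assoc)
  finally show ?thesis .
qed

lemma key_ineq:
  fixes a b c d \<rho> t :: real
  assumes pos: "a > 0" "b > 0" "c > 0" "d > 0" and r: "0 < \<rho>" "\<rho> < 1" and t: "t > 0"
    and h1: "\<bar>a - c\<bar> \<le> \<rho> * (a + c)" and h2: "\<bar>b - d\<bar> \<le> \<rho> * (b + d)"
  shows "\<bar>a * d - b * c\<bar> * t \<le> \<rho> * ((a * t + b) * (c * t + d))"
proof -
  have e1: "\<bar>a * t - c * t\<bar> = \<bar>a - c\<bar> * t" using t by (simp add: abs_mult flip: left_diff_distrib)
  have e2: "\<rho> * (a + c) * t = \<rho> * (a * t + c * t)" by (simp add: algebra_simps)
  have "\<bar>a * t - c * t\<bar> \<le> \<rho> * (a * t + c * t)"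
    using mult_right_mono[OF h1, of t] t e1 e2 by simp
  from key_ineq0[OF _ pos(2) _ pos(4) r this h2] pos t
  have "\<bar>a * t * d - b * (c * t)\<bar> \<le> \<rho> * ((a * t + b) * (c * t + d))" by simp
  moreover have "a * t * d - b * (c * t) = (a * d - b * c) * t" by (simp add: algebra_simps)
  hence "\<bar>a * t * d - b * (c * t)\<bar> = \<bar>a * d - b * c\<bar> * t"
    using t by (simp add: abs_mult)
  ultimately show ?thesis by simp
qed

lemma lip_h:
  fixes a b c d \<rho> :: real
  assumes pos: "a > 0" "b > 0" "c > 0" "d > 0" and r: "0 < \<rho>" "\<rho> < 1"
    and h1: "\<bar>a - c\<bar> \<le> \<rho> * (a + c)" and h2: "\<bar>b - d\<bar> \<le> \<rho> * (b + d)"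
  shows "\<bar>(ln (a * exp u + b) - ln (c * exp u + d)) - (ln (a * exp v + b) - ln (c * exp v + d))\<bar> \<le> \<rho> * \<bar>u - v\<bar>"
proof -
  define h where "h u = ln (a * exp u + b) - ln (c * exp u + d)" for u
  define h' where "h' u = a * exp u / (a * exp u + b) - c * exp u / (c * exp u + d)" for u
  have D: "(h has_real_derivative h' x) (at x)" for x
    unfolding h_def h'_def using pos
    by (auto intro!: derivative_eq_intros add_pos_pos simp: field_simps)
  have B: "\<bar>h' x\<bar> \<le> \<rho>" for x
  proof -
    have e: "exp x > 0" by simp
    have pa: "a * exp x + b > 0" "c * exp x + d > 0" using pos by (auto intro!: add_pos_pos)
    have "h' x = (a * d - b * c) * exp x / ((a * exp x + b) * (c * exp x + d))"
      unfolding h'_def using pa by (simp add: field_simps)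
    hence "\<bar>h' x\<bar> = \<bar>a * d - b * c\<bar> * exp x / ((a * exp x + b) * (c * exp x + d))"
      using pa by (simp add: abs_mult abs_divide)
    also have "\<dots> \<le> \<rho>" using key_ineq[OF pos r e h1 h2] pa
      by (simp add: divide_le_eq)
    finally show ?thesis .
  qed
  have "\<bar>h u - h v\<bar> \<le> \<rho> * \<bar>u - v\<bar>" for u v
  proof (cases "u = v")
    case False
    {
      fix u v :: real assume uv: "u < v"
      obtain z where "u < z" "z < v" "h v - h u = (v - u) * h' z"
        using MVT2[OF uv, of h h'] D by blast
      hence "h u - h v = (u - v) * h' z" by (simp add: algebra_simps)
      hence "\<bar>h u - h v\<bar> = \<bar>u - v\<bar> * \<bar>h' z\<bar>" by (simp add: abs_mult)
      also have "\<dots> \<le> \<bar>u - v\<bar> * \<rho>" using B by (intro mult_left_mono) auto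
      finally have "\<bar>h u - h v\<bar> \<le> \<rho> * \<bar>u - v\<bar>" by (simp add: mult.commute)
    }
    note * = this
    show ?thesis using False *[of u v] *[of v u] by (cases "u < v") (auto simp: abs_minus_commute)
  qed simp
  thus ?thesis unfolding h_def .
qed



lemma fmob_eq: "fmob B x = ((B$1$1 - B$1$2 - B$2$1 + B$2$2) * x + (B$1$1 + B$1$2 - B$2$1 - B$2$2)) /
   ((B$1$1 - B$1$2 + B$2$1 - B$2$2) * x + (B$1$1 + B$1$2 + B$2$1 + B$2$2))"
  by (simp add: fmob_def Let_def)

lemma artanh_fmob:
  fixes a b c d x :: real
  assumes pos: "a > 0" "b > 0" "c > 0" "d > 0" and x: "-1 < x" "x < 1"
  defines "f \<equiv> ((a - b - c + d) * x + (a + b - c - d)) / ((a - b + c - d) * x + (a + b + c + d))"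
  shows "2 * artanh f = ln (a * exp (2 * artanh x) + b) - ln (c * exp (2 * artanh x) + d)"
proof -
  have t: "exp (2 * artanh x) = (1 + x) / (1 - x)"
    using x by (simp add: artanh_def)
  have D: "(a - b + c - d) * x + (a + b + c + d) = (a + c) * (1 + x) + (b + d) * (1 - x)"
    by (simp add: algebra_simps)
  have px: "0 < 1 + x" "0 < 1 - x" using x by auto
  have Dp: "(a + c) * (1 + x) + (b + d) * (1 - x) > 0"
    using add_pos_pos[OF mult_pos_pos[OF _ px(1)] mult_pos_pos[OF _ px(2)], of "a + c" "b + d"] pos by simp
  have P: "a * (1 + x) + b * (1 - x) > 0"
    using add_pos_pos[OF mult_pos_pos[OF _ px(1)] mult_pos_pos[OF _ px(2)], of a b] pos by simp
  have Q: "c * (1 + x) + d * (1 - x) > 0"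
    using add_pos_pos[OF mult_pos_pos[OF _ px(1)] mult_pos_pos[OF _ px(2)], of c d] pos by simp
  have e1: "1 + f = 2 * (a * (1 + x) + b * (1 - x)) / ((a + c) * (1 + x) + (b + d) * (1 - x))"
    unfolding f_def D using Dp by (simp add: field_simps)
  have e2: "1 - f = 2 * (c * (1 + x) + d * (1 - x)) / ((a + c) * (1 + x) + (b + d) * (1 - x))"
    unfolding f_def D using Dp by (simp add: field_simps)
  have gen: "(2 * P / D) / (2 * Q / D) = P / Q" if "D > 0" for P Q D :: real
    using that by (simp add: field_simps)
  have "(1 + f) / (1 - f) = (a * (1 + x) + b * (1 - x)) / (c * (1 + x) + d * (1 - x))"
    unfolding e1 e2 using Dp by (rule gen)
  also have "\<dots> = (a * ((1 + x) / (1 - x)) + b) / (c * ((1 + x) / (1 - x)) + d)"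
  proof -
    have g1: "a * ((1 + x) / (1 - x)) + b = (a * (1 + x) + b * (1 - x)) / (1 - x)"
      using px by (simp add: field_simps)
    have g2: "c * ((1 + x) / (1 - x)) + d = (c * (1 + x) + d * (1 - x)) / (1 - x)"
      using px by (simp add: field_simps)
    have gen2: "P / Q = (P / E) / (Q / E)" if "E > 0" for P Q E :: real
      using that by (simp add: field_simps)
    show ?thesis unfolding g1 g2 using px(2) by (rule gen2)
  qed
  finally have r: "(1 + f) / (1 - f) = (a * exp (2 * artanh x) + b) / (c * exp (2 * artanh x) + d)"
    by (simp add: t)
  have "2 * artanh f = ln ((1 + f) / (1 - f))" by (simp add: artanh_def)
  also have "\<dots> = ln (a * exp (2 * artanh x) + b) - ln (c * exp (2 * artanh x) + d)"
    unfolding r using pos by (intro ln_divide_pos add_pos_pos mult_pos_pos) auto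
  finally show ?thesis .
qed

lemma fmob_contract:
  fixes B :: "real^2^2" and \<rho> x y :: real
  assumes Bpos: "\<forall>i j. B $ i $ j > 0" and r: "0 < \<rho>" "\<rho> < 1"
    and fi: "fmob B ` {-1..1} \<subseteq> {-\<rho>..\<rho>}"
    and x: "-1 < x" "x < 1" and y: "-1 < y" "y < 1"
  shows "dhyp (fmob B x) (fmob B y) \<le> \<rho> * dhyp x y"
proof -
  define a where "a = B$1$1"
  define b where "b = B$1$2"
  define c where "c = B$2$1"
  define d where "d = B$2$2"
  have pos: "a > 0" "b > 0" "c > 0" "d > 0" using Bpos by (auto simp: a_def b_def c_def d_def)
  have fe: "fmob B z = ((a - b - c + d) * z + (a + b - c - d)) / ((a - b + c - d) * z + (a + b + c + d))" for z
    by (simp add: fmob_eq a_def b_def c_def d_def)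
  have f1: "fmob B 1 = (a - c) / (a + c)"
    unfolding fe using pos by (simp add: field_simps)
  have f2: "fmob B (-1) = (b - d) / (b + d)"
    unfolding fe using pos by (simp add: field_simps)
  have fa: "\<forall>z\<in>{-1..1}. fmob B z \<in> {-\<rho>..\<rho>}" using fi by (auto simp: image_subset_iff)
  have "fmob B 1 \<in> {-\<rho>..\<rho>}" "fmob B (-1) \<in> {-\<rho>..\<rho>}" using fa[rule_format, of 1] fa[rule_format, of "-1"] by auto
  hence h1: "\<bar>a - c\<bar> \<le> \<rho> * (a + c)" and h2: "\<bar>b - d\<bar> \<le> \<rho> * (b + d)"
    unfolding f1 f2 using pos by (auto simp: abs_le_iff field_simps)
  have ex: "2 * artanh (fmob B x) = ln (a * exp (2 * artanh x) + b) - ln (c * exp (2 * artanh x) + d)"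
    unfolding fe by (rule artanh_fmob[OF pos x])
  have ey: "2 * artanh (fmob B y) = ln (a * exp (2 * artanh y) + b) - ln (c * exp (2 * artanh y) + d)"
    unfolding fe by (rule artanh_fmob[OF pos y])
  have ab: "\<bar>2 * u - 2 * v\<bar> = 2 * \<bar>u - v\<bar>" for u v :: real by (simp add: abs_if)
  have "dhyp (fmob B x) (fmob B y) = \<bar>2 * artanh (fmob B x) - 2 * artanh (fmob B y)\<bar>"
    by (simp only: dhyp_def ab)
  also have "\<dots> \<le> \<rho> * \<bar>2 * artanh x - 2 * artanh y\<bar>"
    unfolding ex ey by (rule lip_h[OF pos r h1 h2])
  also have "\<dots> = \<rho> * dhyp x y" by (simp only: dhyp_def ab)
  finally show ?thesis .
qed



lemma wsum_cong:
  assumes "\<And>i. i \<in> I \<Longrightarrow> \<mu> i = \<nu> i"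
  shows "wsum_measure S I w \<mu> = wsum_measure S I w \<nu>"
  unfolding wsum_measure_def using assms by (intro arg_cong[where f="measure_of _ _"] ext sum.cong) auto

lemma wsum_distr:
  assumes fin: "finite I" and sets: "\<And>i. i \<in> I \<Longrightarrow> sets (\<mu> i) = sets S" and g: "g \<in> measurable S T"
  shows "distr (wsum_measure S I w \<mu>) T g = wsum_measure T I w (\<lambda>i. distr (\<mu> i) T g)"
proof (rule measure_eqI)
  fix A assume A: "A \<in> sets (distr (wsum_measure S I w \<mu>) T g)"
  hence AT: "A \<in> sets T" by simp
  have gi: "g \<in> measurable (\<mu> i) T" if "i \<in> I" for i using g sets[OF that] by (simp cong: measurable_cong_sets)
  have "emeasure (distr (wsum_measure S I w \<mu>) T g) A = emeasure (wsum_measure S I w \<mu>) (g -` A \<inter> space S)"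
    using g AT by (simp add: emeasure_distr)
  also have "\<dots> = (\<Sum>i\<in>I. ennreal (w i) * emeasure (\<mu> i) (g -` A \<inter> space S))"
    by (rule wsum_emeasure[OF fin sets measurable_sets[OF g AT]])
  also have "\<dots> = (\<Sum>i\<in>I. ennreal (w i) * emeasure (distr (\<mu> i) T g) A)"
  proof (intro sum.cong refl)
    fix i assume i: "i \<in> I"
    show "ennreal (w i) * emeasure (\<mu> i) (g -` A \<inter> space S) = ennreal (w i) * emeasure (distr (\<mu> i) T g) A"
      using emeasure_distr[OF gi[OF i] AT] sets_eq_imp_space_eq[OF sets[OF i]] by simp
  qed
  also have "\<dots> = emeasure (wsum_measure T I w (\<lambda>i. distr (\<mu> i) T g)) A"
    using AT by (intro wsum_emeasure[OF fin, symmetric]) simp_all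
  finally show "emeasure (distr (wsum_measure S I w \<mu>) T g) A = emeasure (wsum_measure T I w (\<lambda>i. distr (\<mu> i) T g)) A" .
qed simp

lemma wsum_prob:
  assumes fin: "finite I" and sets: "\<And>i. i \<in> I \<Longrightarrow> sets (\<mu> i) = sets S"
    and prob: "\<And>i. i \<in> I \<Longrightarrow> prob_space (\<mu> i)"
    and w0: "\<And>i. i \<in> I \<Longrightarrow> w i \<ge> 0" and w1: "(\<Sum>i\<in>I. w i) = 1"
  shows "prob_space (wsum_measure S I w \<mu>)"
proof (rule prob_spaceI)
  have "emeasure (wsum_measure S I w \<mu>) (space (wsum_measure S I w \<mu>)) = (\<Sum>i\<in>I. ennreal (w i) * emeasure (\<mu> i) (space S))"
    by (simp add: wsum_emeasure[OF fin sets])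
  also have "\<dots> = (\<Sum>i\<in>I. ennreal (w i))"
  proof (intro sum.cong refl)
    fix i assume i: "i \<in> I"
    show "ennreal (w i) * emeasure (\<mu> i) (space S) = ennreal (w i)"
      using prob_space.emeasure_space_1[OF prob[OF i]] sets_eq_imp_space_eq[OF sets[OF i]] by simp
  qed
  also have "\<dots> = 1" using w0 w1 by simp
  finally show "emeasure (wsum_measure S I w \<mu>) (space (wsum_measure S I w \<mu>)) = 1" .
qed

lemma ennreal_le_INF_affine:
  fixes X A a :: ennreal and c :: "'g \<Rightarrow> ennreal"
  assumes a: "a < top" "a > 0" and le: "\<And>g. g \<in> G \<Longrightarrow> X \<le> A + a * c g"
  shows "X \<le> A + a * (INF g\<in>G. c g)"
proof (cases "G = {}")
  case True
  then show ?thesis using a by (auto simp: ennreal_mult_top)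
next
  case False
  define f where "f y = A + a * y" for y :: ennreal
  have mono: "mono f" unfolding f_def by (auto simp: mono_def intro: add_left_mono mult_left_mono)
  have cont: "isCont f y" for y
    unfolding isCont_def f_def
    by (intro tendsto_add tendsto_const ennreal_tendsto_cmult[OF a(1)] tendsto_ident_at)
  have "f (Inf (c ` G)) = (INF s\<in>c ` G. f s)"
    by (rule continuous_at_Inf_mono[OF mono])
       (auto simp: False intro: continuous_at_imp_continuous_at_within[OF cont])
  moreover have "X \<le> (INF s\<in>c ` G. f s)" using le by (auto simp: f_def intro!: INF_greatest)
  ultimately show ?thesis by (simp add: f_def)
qed



lemma space_Ihyp: "space Ihyp = {-1<..<1}"
  by (simp add: Ihyp_def space_restrict_space)

lemma artanh_meas[measurable]: "(artanh :: real \<Rightarrow> real) \<in> borel_measurable Ihyp"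
  unfolding Ihyp_def by (rule measurable_restrict_space1) (unfold artanh_def[abs_def], measurable)

lemma dhyp_meas[measurable]: "(\<lambda>p. ennreal (dhyp (fst p) (snd p))) \<in> borel_measurable (Ihyp \<Otimes>\<^sub>M Ihyp)"
  unfolding dhyp_def by measurable

lemma dhyp0_meas[measurable]: "(\<lambda>x. ennreal (dhyp x 0)) \<in> borel_measurable Ihyp"
  unfolding dhyp_def by measurable

lemma dhyp_nonneg: "dhyp x y \<ge> 0" by (simp add: dhyp_def)

lemma dhyp_tri: "dhyp x z \<le> dhyp x y + dhyp y z" unfolding dhyp_def by (simp add: abs_if)

lemma mix_P1:
  fixes F :: "'r \<Rightarrow> real \<Rightarrow> real" and \<eta> :: "'r \<Rightarrow> real measure"
  assumes fin: "finite C" and w0: "\<And>r. r \<in> C \<Longrightarrow> w r \<ge> 0" and w1: "(\<Sum>r\<in>C. w r) = 1"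
    and \<eta>: "\<And>r. r \<in> C \<Longrightarrow> \<eta> r \<in> P1"
    and Fm: "\<And>r. r \<in> C \<Longrightarrow> F r \<in> measurable Ihyp Ihyp" and \<rho>0: "0 \<le> \<rho>"
    and Fc: "\<And>r x y. r \<in> C \<Longrightarrow> x \<in> space Ihyp \<Longrightarrow> y \<in> space Ihyp \<Longrightarrow> dhyp (F r x) (F r y) \<le> \<rho> * dhyp x y"
  shows "wsum_measure Ihyp C w (\<lambda>r. distr (\<eta> r) Ihyp (F r)) \<in> P1"
proof -
  have s\<eta>: "sets (\<eta> r) = sets Ihyp" and p\<eta>: "prob_space (\<eta> r)"
    and i\<eta>: "(\<integral>\<^sup>+ x. ennreal (dhyp x 0) \<partial>\<eta> r) < \<infinity>" if "r \<in> C" for r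
    using \<eta>[OF that] by (auto simp: P1_def)
  have sd: "sets (distr (\<eta> r) Ihyp (F r)) = sets Ihyp" for r by simp
  have Fm\<eta>: "F r \<in> measurable (\<eta> r) Ihyp" if "r \<in> C" for r
    using Fm[OF that] s\<eta>[OF that] by (simp cong: measurable_cong_sets)
  have pd: "prob_space (distr (\<eta> r) Ihyp (F r))" if "r \<in> C" for r
    by (rule prob_space.prob_space_distr[OF p\<eta>[OF that] Fm\<eta>[OF that]])
  have prob: "prob_space (wsum_measure Ihyp C w (\<lambda>r. distr (\<eta> r) Ihyp (F r)))"
    by (rule wsum_prob[OF fin sd pd w0 w1])
  have 0: "(0::real) \<in> space Ihyp" by (simp add: space_Ihyp)
  have fin_r: "ennreal (w r) * (\<integral>\<^sup>+ x. ennreal (dhyp x 0) \<partial>distr (\<eta> r) Ihyp (F r)) < \<infinity>" if r: "r \<in> C" for r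
  proof -
    define K where "K = dhyp (F r 0) 0"
    have "(\<integral>\<^sup>+ x. ennreal (dhyp x 0) \<partial>distr (\<eta> r) Ihyp (F r)) = (\<integral>\<^sup>+ x. ennreal (dhyp (F r x) 0) \<partial>\<eta> r)"
      by (rule nn_integral_distr[OF Fm\<eta>[OF r]]) simp
    also have "\<dots> \<le> (\<integral>\<^sup>+ x. ennreal \<rho> * ennreal (dhyp x 0) + ennreal K \<partial>\<eta> r)"
    proof (rule nn_integral_mono)
      fix x assume "x \<in> space (\<eta> r)"
      hence x: "x \<in> space Ihyp" using sets_eq_imp_space_eq[OF s\<eta>[OF r]] by simp
      have "dhyp (F r x) 0 \<le> dhyp (F r x) (F r 0) + dhyp (F r 0) 0" by (rule dhyp_tri)
      also have "\<dots> \<le> \<rho> * dhyp x 0 + K" unfolding K_def using Fc[OF r x 0] by simp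
      finally have "ennreal (dhyp (F r x) 0) \<le> ennreal (\<rho> * dhyp x 0 + K)" by (rule ennreal_leI)
      also have "\<dots> = ennreal \<rho> * ennreal (dhyp x 0) + ennreal K"
        using \<rho>0 dhyp_nonneg[of x 0] dhyp_nonneg[of "F r 0" 0] unfolding K_def
        by (simp add: ennreal_mult)
      finally show "ennreal (dhyp (F r x) 0) \<le> ennreal \<rho> * ennreal (dhyp x 0) + ennreal K" .
    qed
    also have "\<dots> = ennreal \<rho> * (\<integral>\<^sup>+ x. ennreal (dhyp x 0) \<partial>\<eta> r) + ennreal K * emeasure (\<eta> r) (space (\<eta> r))"
      using s\<eta>[OF r] by (subst nn_integral_add) (auto simp: nn_integral_cmult cong: measurable_cong_sets)
    also have "\<dots> < \<infinity>"
      using i\<eta>[OF r] prob_space.emeasure_space_1[OF p\<eta>[OF r]] by (simp add: ennreal_mult_less_top)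
    finally show ?thesis by (simp add: ennreal_mult_less_top)
  qed
  have "(\<integral>\<^sup>+ x. ennreal (dhyp x 0) \<partial>wsum_measure Ihyp C w (\<lambda>r. distr (\<eta> r) Ihyp (F r)))
      = (\<Sum>r\<in>C. ennreal (w r) * (\<integral>\<^sup>+ x. ennreal (dhyp x 0) \<partial>distr (\<eta> r) Ihyp (F r)))"
    by (rule wsum_nn_integral[OF fin sd]) simp
  also have "\<dots> < \<infinity>" using fin fin_r by (simp add: ennreal_sum_less_top)
  finally show ?thesis using prob unfolding P1_def by simp
qed



lemma sum_INF_bound:
  fixes a :: "'i \<Rightarrow> ennreal" and c :: "'i \<Rightarrow> 'g \<Rightarrow> ennreal" and G :: "'i \<Rightarrow> 'g set" and X :: ennreal
  assumes fin: "finite I" and a: "\<And>i. i \<in> I \<Longrightarrow> a i < top" "\<And>i. i \<in> I \<Longrightarrow> a i > 0"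
    and le: "\<And>\<gamma>. (\<And>i. i \<in> I \<Longrightarrow> \<gamma> i \<in> G i) \<Longrightarrow> X \<le> (\<Sum>i\<in>I. a i * c i (\<gamma> i))"
  shows "X \<le> (\<Sum>i\<in>I. a i * (INF g\<in>G i. c i g))"
proof (cases "\<exists>i\<in>I. G i = {}")
  case True
  then obtain j where j: "j \<in> I" "G j = {}" by blast
  have "a j * (INF g\<in>G j. c j g) = top" using j a[OF j(1)] by (simp add: ennreal_mult_top)
  hence "(\<Sum>i\<in>I. a i * (INF g\<in>G i. c i g)) = top" using fin j(1) by (subst ennreal_sum_eq_top) auto
  then show ?thesis by simp
next
  case False
  have main: "finite S \<Longrightarrow> S \<subseteq> I \<Longrightarrow> (\<forall>\<gamma>. (\<forall>i\<in>I. \<gamma> i \<in> G i) \<longrightarrow>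
      X \<le> (\<Sum>i\<in>S. a i * (INF g\<in>G i. c i g)) + (\<Sum>i\<in>I - S. a i * c i (\<gamma> i)))" for S
  proof (induction S rule: finite_induct)
    case empty
    then show ?case using le by simp
  next
    case (insert j S)
    have jI: "j \<in> I" and SI: "S \<subseteq> I" using insert.prems by auto
    show ?case
    proof (intro allI impI)
      fix \<gamma> assume \<gamma>: "\<forall>i\<in>I. \<gamma> i \<in> G i"
      define A where "A = (\<Sum>i\<in>S. a i * (INF g\<in>G i. c i g)) + (\<Sum>i\<in>I - insert j S. a i * c i (\<gamma> i))"
      have "X \<le> A + a j * c j g" if g: "g \<in> G j" for g
      proof -
        define \<gamma>' where "\<gamma>' = \<gamma>(j := g)"
        have "\<forall>i\<in>I. \<gamma>' i \<in> G i" using \<gamma> g by (simp add: \<gamma>'_def)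
        hence "X \<le> (\<Sum>i\<in>S. a i * (INF g\<in>G i. c i g)) + (\<Sum>i\<in>I - S. a i * c i (\<gamma>' i))"
          using insert.IH SI by blast
        also have "(\<Sum>i\<in>I - S. a i * c i (\<gamma>' i)) = a j * c j (\<gamma>' j) + (\<Sum>i\<in>I - S - {j}. a i * c i (\<gamma>' i))"
          using fin jI insert.hyps(2) by (intro sum.remove) auto
        also have "(\<Sum>i\<in>I - S - {j}. a i * c i (\<gamma>' i)) = (\<Sum>i\<in>I - insert j S. a i * c i (\<gamma> i))"
          by (intro sum.cong) (auto simp: \<gamma>'_def)
        finally show ?thesis by (simp add: A_def \<gamma>'_def ac_simps)
      qed
      hence "X \<le> A + a j * (INF g\<in>G j. c j g)"
        by (intro ennreal_le_INF_affine a jI) auto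
      thus "X \<le> (\<Sum>i\<in>insert j S. a i * (INF g\<in>G i. c i g)) + (\<Sum>i\<in>I - insert j S. a i * c i (\<gamma> i))"
        using insert.hyps by (simp add: A_def ac_simps)
    qed
  qed
  define \<gamma> where "\<gamma> i = (SOME g. g \<in> G i)" for i
  have "\<gamma> i \<in> G i" if "i \<in> I" for i using False that unfolding \<gamma>_def by (metis ex_in_conv someI_ex)
  from main[OF fin order_refl, rule_format, OF this] show ?thesis by simp
qed



lemma mix_coupling:
  fixes F :: "'r \<Rightarrow> real \<Rightarrow> real" and \<eta> \<zeta> :: "'r \<Rightarrow> real measure" and \<gamma> :: "'r \<Rightarrow> (real \<times> real) measure"
  assumes fin: "finite C" and w0: "\<And>r. r \<in> C \<Longrightarrow> w r \<ge> 0" and w1: "(\<Sum>r\<in>C. w r) = 1"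
    and \<gamma>: "\<And>r. r \<in> C \<Longrightarrow> \<gamma> r \<in> couplings (\<eta> r) (\<zeta> r)"
    and Fm: "\<And>r. r \<in> C \<Longrightarrow> F r \<in> measurable Ihyp Ihyp" and \<rho>0: "0 \<le> \<rho>"
    and Fc: "\<And>r x y. r \<in> C \<Longrightarrow> x \<in> space Ihyp \<Longrightarrow> y \<in> space Ihyp \<Longrightarrow> dhyp (F r x) (F r y) \<le> \<rho> * dhyp x y"
  defines "\<Gamma> \<equiv> wsum_measure (Ihyp \<Otimes>\<^sub>M Ihyp) C w (\<lambda>r. distr (\<gamma> r) (Ihyp \<Otimes>\<^sub>M Ihyp) (\<lambda>p. (F r (fst p), F r (snd p))))"
  shows "\<Gamma> \<in> couplings (wsum_measure Ihyp C w (\<lambda>r. distr (\<eta> r) Ihyp (F r))) (wsum_measure Ihyp C w (\<lambda>r. distr (\<zeta> r) Ihyp (F r)))"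
    and "(\<integral>\<^sup>+ p. ennreal (dhyp (fst p) (snd p)) \<partial>\<Gamma>) \<le> (\<Sum>r\<in>C. ennreal (w r) * (ennreal \<rho> * (\<integral>\<^sup>+ p. ennreal (dhyp (fst p) (snd p)) \<partial>\<gamma> r)))"
proof -
  define G where "G r = (\<lambda>p::real \<times> real. (F r (fst p), F r (snd p)))" for r
  have \<Gamma>G: "\<Gamma> = wsum_measure (Ihyp \<Otimes>\<^sub>M Ihyp) C w (\<lambda>r. distr (\<gamma> r) (Ihyp \<Otimes>\<^sub>M Ihyp) (G r))"
    by (simp add: \<Gamma>_def G_def)
  have s\<gamma>: "sets (\<gamma> r) = sets (Ihyp \<Otimes>\<^sub>M Ihyp)" and p\<gamma>: "prob_space (\<gamma> r)"
    and m1: "distr (\<gamma> r) Ihyp fst = \<eta> r" and m2: "distr (\<gamma> r) Ihyp snd = \<zeta> r" if "r \<in> C" for r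
    using \<gamma>[OF that] by (auto simp: couplings_def)
  have Gm: "G r \<in> measurable (Ihyp \<Otimes>\<^sub>M Ihyp) (Ihyp \<Otimes>\<^sub>M Ihyp)" if r: "r \<in> C" for r
    unfolding G_def
    by (intro measurable_Pair measurable_compose[OF measurable_fst Fm[OF r]] measurable_compose[OF measurable_snd Fm[OF r]])
  have Gm\<gamma>: "G r \<in> measurable (\<gamma> r) (Ihyp \<Otimes>\<^sub>M Ihyp)" if r: "r \<in> C" for r
    using Gm[OF r] s\<gamma>[OF r] by (simp cong: measurable_cong_sets)
  have fst\<gamma>: "fst \<in> measurable (\<gamma> r) Ihyp" and snd\<gamma>: "snd \<in> measurable (\<gamma> r) Ihyp" if r: "r \<in> C" for r
    using s\<gamma>[OF r] by (simp_all cong: measurable_cong_sets)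
  have sd: "sets (distr (\<gamma> r) (Ihyp \<Otimes>\<^sub>M Ihyp) (G r)) = sets (Ihyp \<Otimes>\<^sub>M Ihyp)" for r by simp
  have pd: "prob_space (distr (\<gamma> r) (Ihyp \<Otimes>\<^sub>M Ihyp) (G r))" if r: "r \<in> C" for r
    by (rule prob_space.prob_space_distr[OF p\<gamma>[OF r] Gm\<gamma>[OF r]])
  have prob: "prob_space \<Gamma>" unfolding \<Gamma>G by (rule wsum_prob[OF fin sd pd w0 w1])
  have marg1: "distr \<Gamma> Ihyp fst = wsum_measure Ihyp C w (\<lambda>r. distr (\<eta> r) Ihyp (F r))"
  proof -
    have "distr \<Gamma> Ihyp fst = wsum_measure Ihyp C w (\<lambda>r. distr (distr (\<gamma> r) (Ihyp \<Otimes>\<^sub>M Ihyp) (G r)) Ihyp fst)"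
      unfolding \<Gamma>G by (rule wsum_distr[OF fin sd measurable_fst])
    also have "\<dots> = wsum_measure Ihyp C w (\<lambda>r. distr (\<eta> r) Ihyp (F r))"
    proof (rule wsum_cong)
      fix r assume r: "r \<in> C"
      have "distr (distr (\<gamma> r) (Ihyp \<Otimes>\<^sub>M Ihyp) (G r)) Ihyp fst = distr (\<gamma> r) Ihyp (fst \<circ> G r)"
        by (rule distr_distr[OF measurable_fst Gm\<gamma>[OF r]])
      also have "fst \<circ> G r = F r \<circ> fst" by (auto simp: G_def)
      also have "distr (\<gamma> r) Ihyp (F r \<circ> fst) = distr (distr (\<gamma> r) Ihyp fst) Ihyp (F r)"
        by (rule distr_distr[OF Fm[OF r] fst\<gamma>[OF r], symmetric])
      finally show "distr (distr (\<gamma> r) (Ihyp \<Otimes>\<^sub>M Ihyp) (G r)) Ihyp fst = distr (\<eta> r) Ihyp (F r)"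
        using m1[OF r] by simp
    qed
    finally show ?thesis .
  qed
  have marg2: "distr \<Gamma> Ihyp snd = wsum_measure Ihyp C w (\<lambda>r. distr (\<zeta> r) Ihyp (F r))"
  proof -
    have "distr \<Gamma> Ihyp snd = wsum_measure Ihyp C w (\<lambda>r. distr (distr (\<gamma> r) (Ihyp \<Otimes>\<^sub>M Ihyp) (G r)) Ihyp snd)"
      unfolding \<Gamma>G by (rule wsum_distr[OF fin sd measurable_snd])
    also have "\<dots> = wsum_measure Ihyp C w (\<lambda>r. distr (\<zeta> r) Ihyp (F r))"
    proof (rule wsum_cong)
      fix r assume r: "r \<in> C"
      have "distr (distr (\<gamma> r) (Ihyp \<Otimes>\<^sub>M Ihyp) (G r)) Ihyp snd = distr (\<gamma> r) Ihyp (snd \<circ> G r)"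
        by (rule distr_distr[OF measurable_snd Gm\<gamma>[OF r]])
      also have "snd \<circ> G r = F r \<circ> snd" by (auto simp: G_def)
      also have "distr (\<gamma> r) Ihyp (F r \<circ> snd) = distr (distr (\<gamma> r) Ihyp snd) Ihyp (F r)"
        by (rule distr_distr[OF Fm[OF r] snd\<gamma>[OF r], symmetric])
      finally show "distr (distr (\<gamma> r) (Ihyp \<Otimes>\<^sub>M Ihyp) (G r)) Ihyp snd = distr (\<zeta> r) Ihyp (F r)"
        using m2[OF r] by simp
    qed
    finally show ?thesis .
  qed
  show "\<Gamma> \<in> couplings (wsum_measure Ihyp C w (\<lambda>r. distr (\<eta> r) Ihyp (F r))) (wsum_measure Ihyp C w (\<lambda>r. distr (\<zeta> r) Ihyp (F r)))"
    unfolding couplings_def using prob marg1 marg2 by (simp add: \<Gamma>G)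
  have "(\<integral>\<^sup>+ p. ennreal (dhyp (fst p) (snd p)) \<partial>\<Gamma>)
      = (\<Sum>r\<in>C. ennreal (w r) * (\<integral>\<^sup>+ p. ennreal (dhyp (fst p) (snd p)) \<partial>distr (\<gamma> r) (Ihyp \<Otimes>\<^sub>M Ihyp) (G r)))"
    unfolding \<Gamma>G by (rule wsum_nn_integral[OF fin sd dhyp_meas])
  also have "\<dots> \<le> (\<Sum>r\<in>C. ennreal (w r) * (ennreal \<rho> * (\<integral>\<^sup>+ p. ennreal (dhyp (fst p) (snd p)) \<partial>\<gamma> r)))"
  proof (intro sum_mono mult_left_mono)
    fix r assume r: "r \<in> C"
    have "(\<integral>\<^sup>+ p. ennreal (dhyp (fst p) (snd p)) \<partial>distr (\<gamma> r) (Ihyp \<Otimes>\<^sub>M Ihyp) (G r))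
        = (\<integral>\<^sup>+ p. ennreal (dhyp (fst (G r p)) (snd (G r p))) \<partial>\<gamma> r)"
      by (rule nn_integral_distr[OF Gm\<gamma>[OF r]]) simp
    also have "\<dots> \<le> (\<integral>\<^sup>+ p. ennreal \<rho> * ennreal (dhyp (fst p) (snd p)) \<partial>\<gamma> r)"
    proof (rule nn_integral_mono)
      fix p assume "p \<in> space (\<gamma> r)"
      hence "p \<in> space (Ihyp \<Otimes>\<^sub>M Ihyp)" using sets_eq_imp_space_eq[OF s\<gamma>[OF r]] by simp
      hence p: "fst p \<in> space Ihyp" "snd p \<in> space Ihyp" by (auto simp: space_pair_measure)
      have "ennreal (dhyp (fst (G r p)) (snd (G r p))) \<le> ennreal (\<rho> * dhyp (fst p) (snd p))"
        using Fc[OF r p] by (intro ennreal_leI) (simp add: G_def)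
      also have "\<dots> = ennreal \<rho> * ennreal (dhyp (fst p) (snd p))"
        by (rule ennreal_mult'[OF \<rho>0])
      finally show "ennreal (dhyp (fst (G r p)) (snd (G r p))) \<le> ennreal \<rho> * ennreal (dhyp (fst p) (snd p))" .
    qed
    also have "\<dots> = ennreal \<rho> * (\<integral>\<^sup>+ p. ennreal (dhyp (fst p) (snd p)) \<partial>\<gamma> r)"
      using s\<gamma>[OF r] by (intro nn_integral_cmult) (simp cong: measurable_cong_sets)
    finally show "(\<integral>\<^sup>+ p. ennreal (dhyp (fst p) (snd p)) \<partial>distr (\<gamma> r) (Ihyp \<Otimes>\<^sub>M Ihyp) (G r))
        \<le> ennreal \<rho> * (\<integral>\<^sup>+ p. ennreal (dhyp (fst p) (snd p)) \<partial>\<gamma> r)" .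
  qed simp
  finally show "(\<integral>\<^sup>+ p. ennreal (dhyp (fst p) (snd p)) \<partial>\<Gamma>) \<le> (\<Sum>r\<in>C. ennreal (w r) * (ennreal \<rho> * (\<integral>\<^sup>+ p. ennreal (dhyp (fst p) (snd p)) \<partial>\<gamma> r)))" .
qed



theorem proposition3p4:
  fixes C :: "'r set" and Q :: "'r \<Rightarrow> 'r \<Rightarrow> real" and \<pi> :: "'r \<Rightarrow> real"
    and B :: "'r \<Rightarrow> real^2^2" and \<rho> :: real
  assumes finC: "finite C" and neC: "C \<noteq> {}"
    and Q_nonneg: "\<forall>r\<in>C. \<forall>r'\<in>C. Q r r' \<ge> 0"
    and Q_stoch: "\<forall>r\<in>C. (\<Sum>r'\<in>C. Q r r') = 1"
    and Q_irred: "irreducible_on C Q"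
    and Q_aper: "aperiodic_on C Q"
    and \<pi>_pos: "\<forall>r\<in>C. \<pi> r > 0"
    and \<pi>_sum: "(\<Sum>r\<in>C. \<pi> r) = 1"
    and \<pi>_stat: "\<forall>r'\<in>C. (\<Sum>r\<in>C. \<pi> r * Q r r') = \<pi> r'"
    and B_pos: "\<forall>r\<in>C. \<forall>i j. B r $ i $ j > 0"
    and B_inv: "\<forall>r\<in>C. det (B r) \<noteq> 0"
    and \<rho>: "0 < \<rho>" "\<rho> < 1"
    and f_into: "\<forall>r\<in>C. fmob (B r) ` {-1..1} \<subseteq> {-\<rho>..\<rho>}"
  shows "(\<forall>\<eta>\<in>P1C C. Hop C Q \<pi> (\<lambda>r. fmob (B r)) \<eta> \<in> P1C C) \<and>
         (\<forall>\<eta>\<in>P1C C. \<forall>\<zeta>\<in>P1C C.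
            WC C \<pi> (Hop C Q \<pi> (\<lambda>r. fmob (B r)) \<eta>) (Hop C Q \<pi> (\<lambda>r. fmob (B r)) \<zeta>)
              \<le> ennreal \<rho> * WC C \<pi> \<eta> \<zeta>)"
proof -
  define F where "F r = fmob (B r)" for r
  define w where "w r' r = \<pi> r * Q r r' / \<pi> r'" for r' r
  have Hdef: "Hop C Q \<pi> (\<lambda>r. fmob (B r)) \<eta> r' = wsum_measure Ihyp C (w r') (\<lambda>r. distr (\<eta> r) Ihyp (F r))" for \<eta> r'
    by (simp add: Hop_def F_def w_def[abs_def])
  have w0: "w r' r \<ge> 0" if "r' \<in> C" "r \<in> C" for r' r
    using that \<pi>_pos Q_nonneg unfolding w_def
    by (intro divide_nonneg_pos mult_nonneg_nonneg) (auto simp: less_imp_le)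
  have w1: "(\<Sum>r\<in>C. w r' r) = 1" if r': "r' \<in> C" for r'
  proof -
    have "(\<Sum>r\<in>C. w r' r) = (\<Sum>r\<in>C. \<pi> r * Q r r') / \<pi> r'" by (simp add: w_def sum_divide_distrib)
    also have "\<dots> = 1" using \<pi>_stat r' \<pi>_pos[rule_format, OF r'] by simp
    finally show ?thesis .
  qed
  have Fmeas: "F r \<in> borel_measurable borel" for r
    unfolding F_def fmob_def Let_def by measurable
  have Frange: "F r x \<in> {-1<..<1}" if r: "r \<in> C" and x: "x \<in> {-1<..<1}" for r x
  proof -
    have "x \<in> {-1..1}" using x by auto
    hence "F r x \<in> {-\<rho>..\<rho>}" using f_into r unfolding F_def by blast
    thus ?thesis using \<rho> by auto
  qed
  have Fm: "F r \<in> measurable Ihyp Ihyp" if r: "r \<in> C" for r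
    unfolding Ihyp_def by (rule measurable_restrict_space3[OF Fmeas]) (use Frange[OF r] in auto)
  have Fc: "dhyp (F r x) (F r y) \<le> \<rho> * dhyp x y" if "r \<in> C" "x \<in> space Ihyp" "y \<in> space Ihyp" for r x y
    using fmob_contract[of "B r" \<rho> x y] B_pos \<rho> f_into that by (auto simp: F_def space_Ihyp)
  have \<rho>0: "0 \<le> \<rho>" using \<rho> by simp
  have part1: "\<forall>\<eta>\<in>P1C C. Hop C Q \<pi> (\<lambda>r. fmob (B r)) \<eta> \<in> P1C C"
  proof
    fix \<eta> assume "\<eta> \<in> P1C C"
    hence \<eta>: "\<eta> r \<in> P1" if "r \<in> C" for r using that by (auto simp: P1C_def)
    show "Hop C Q \<pi> (\<lambda>r. fmob (B r)) \<eta> \<in> P1C C"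
      unfolding P1C_def
    proof
      fix r' assume r': "r' \<in> C"
      show "Hop C Q \<pi> (\<lambda>r. fmob (B r)) \<eta> r' \<in> P1"
        unfolding Hdef by (rule mix_P1[OF finC w0[OF r'] w1[OF r'] \<eta> Fm \<rho>0 Fc])
    qed
  qed
  define cost where "cost g = (\<integral>\<^sup>+ p. ennreal (dhyp (fst p) (snd p)) \<partial>g)" for g :: "(real \<times> real) measure"
  have part2: "WC C \<pi> (Hop C Q \<pi> (\<lambda>r. fmob (B r)) \<eta>) (Hop C Q \<pi> (\<lambda>r. fmob (B r)) \<zeta>) \<le> ennreal \<rho> * WC C \<pi> \<eta> \<zeta>"
    for \<eta> \<zeta>
  proof -
    let ?H\<eta> = "Hop C Q \<pi> (\<lambda>r. fmob (B r)) \<eta>" and ?H\<zeta> = "Hop C Q \<pi> (\<lambda>r. fmob (B r)) \<zeta>"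
    have key: "WC C \<pi> ?H\<eta> ?H\<zeta> \<le> (\<Sum>r\<in>C. (ennreal \<rho> * ennreal (\<pi> r)) * cost (\<gamma> r))"
      if \<gamma>: "\<And>r. r \<in> C \<Longrightarrow> \<gamma> r \<in> couplings (\<eta> r) (\<zeta> r)" for \<gamma>
    proof -
      define Y where "Y r = ennreal \<rho> * cost (\<gamma> r)" for r
      have W1le: "W1 (?H\<eta> r') (?H\<zeta> r') \<le> (\<Sum>r\<in>C. ennreal (w r' r) * Y r)" if r': "r' \<in> C" for r'
      proof -
        have w0': "\<And>r. r \<in> C \<Longrightarrow> 0 \<le> w r' r" using w0[OF r'] .
        note mc = mix_coupling[where C=C and w="w r'" and \<gamma>=\<gamma> and \<eta>=\<eta> and \<zeta>=\<zeta> and F=F and \<rho>=\<rho>,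
          OF finC w0' w1[OF r'] \<gamma> Fm \<rho>0 Fc]
        define \<Gamma> where "\<Gamma> = wsum_measure (Ihyp \<Otimes>\<^sub>M Ihyp) C (w r') (\<lambda>r. distr (\<gamma> r) (Ihyp \<Otimes>\<^sub>M Ihyp) (\<lambda>p. (F r (fst p), F r (snd p))))"
        have mc1: "\<Gamma> \<in> couplings (wsum_measure Ihyp C (w r') (\<lambda>r. distr (\<eta> r) Ihyp (F r))) (wsum_measure Ihyp C (w r') (\<lambda>r. distr (\<zeta> r) Ihyp (F r)))"
          unfolding \<Gamma>_def by (rule mc(1))
        have mc2: "(\<integral>\<^sup>+ p. ennreal (dhyp (fst p) (snd p)) \<partial>\<Gamma>) \<le> (\<Sum>r\<in>C. ennreal (w r' r) * (ennreal \<rho> * (\<integral>\<^sup>+ p. ennreal (dhyp (fst p) (snd p)) \<partial>\<gamma> r)))"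
          unfolding \<Gamma>_def by (rule mc(2))
        show ?thesis unfolding W1_def Hdef Y_def cost_def
          by (rule INF_lower2[where f="\<lambda>g. \<integral>\<^sup>+ p. ennreal (dhyp (fst p) (snd p)) \<partial>g", OF mc1 mc2])
      qed
      have "WC C \<pi> ?H\<eta> ?H\<zeta> = (\<Sum>r'\<in>C. ennreal (\<pi> r') * W1 (?H\<eta> r') (?H\<zeta> r'))"
        by (simp add: WC_def)
      also have "\<dots> \<le> (\<Sum>r'\<in>C. ennreal (\<pi> r') * (\<Sum>r\<in>C. ennreal (w r' r) * Y r))"
        by (intro sum_mono mult_left_mono W1le) simp_all
      also have "\<dots> = (\<Sum>r'\<in>C. \<Sum>r\<in>C. ennreal (\<pi> r * Q r r') * Y r)"
      proof (intro sum.cong refl)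
        fix r' assume r': "r' \<in> C"
        have "ennreal (\<pi> r') * (\<Sum>r\<in>C. ennreal (w r' r) * Y r) = (\<Sum>r\<in>C. (ennreal (\<pi> r') * ennreal (w r' r)) * Y r)"
          by (simp add: sum_distrib_left mult.assoc)
        also have "\<dots> = (\<Sum>r\<in>C. ennreal (\<pi> r * Q r r') * Y r)"
        proof (intro sum.cong refl)
          fix r assume r: "r \<in> C"
          have "ennreal (\<pi> r') * ennreal (w r' r) = ennreal (\<pi> r' * w r' r)"
            using \<pi>_pos[rule_format, OF r'] w0[OF r' r] by (simp add: ennreal_mult)
          also have "\<pi> r' * w r' r = \<pi> r * Q r r'" using \<pi>_pos[rule_format, OF r'] by (simp add: w_def)
          finally show "(ennreal (\<pi> r') * ennreal (w r' r)) * Y r = ennreal (\<pi> r * Q r r') * Y r" by simp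
        qed
        finally show "ennreal (\<pi> r') * (\<Sum>r\<in>C. ennreal (w r' r) * Y r) = (\<Sum>r\<in>C. ennreal (\<pi> r * Q r r') * Y r)" .
      qed
      also have "\<dots> = (\<Sum>r\<in>C. \<Sum>r'\<in>C. ennreal (\<pi> r * Q r r') * Y r)"
        by (rule sum.swap)
      also have "\<dots> = (\<Sum>r\<in>C. ennreal (\<pi> r) * Y r)"
      proof (intro sum.cong refl)
        fix r assume r: "r \<in> C"
        have "(\<Sum>r'\<in>C. ennreal (\<pi> r * Q r r') * Y r) = (\<Sum>r'\<in>C. ennreal (\<pi> r * Q r r')) * Y r"
          by (simp add: sum_distrib_right)
        also have "(\<Sum>r'\<in>C. ennreal (\<pi> r * Q r r')) = ennreal (\<Sum>r'\<in>C. \<pi> r * Q r r')"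
          using \<pi>_pos Q_nonneg r by (intro sum_ennreal) (auto simp: less_imp_le)
        also have "(\<Sum>r'\<in>C. \<pi> r * Q r r') = \<pi> r"
          using Q_stoch r by (simp flip: sum_distrib_left)
        finally show "(\<Sum>r'\<in>C. ennreal (\<pi> r * Q r r') * Y r) = ennreal (\<pi> r) * Y r" .
      qed
      also have "\<dots> = (\<Sum>r\<in>C. (ennreal \<rho> * ennreal (\<pi> r)) * cost (\<gamma> r))"
        by (simp add: Y_def ac_simps)
      finally show ?thesis .
    qed
    have "WC C \<pi> ?H\<eta> ?H\<zeta> \<le> (\<Sum>r\<in>C. (ennreal \<rho> * ennreal (\<pi> r)) * (INF g\<in>couplings (\<eta> r) (\<zeta> r). cost g))"
    proof (rule sum_INF_bound[OF finC])
      fix r assume r: "r \<in> C"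
      show "ennreal \<rho> * ennreal (\<pi> r) < top" by (simp add: ennreal_mult_less_top)
      have "ennreal \<rho> * ennreal (\<pi> r) = ennreal (\<rho> * \<pi> r)"
        using \<rho> by (intro ennreal_mult'[symmetric]) simp
      thus "ennreal \<rho> * ennreal (\<pi> r) > 0" using \<rho> \<pi>_pos r by simp
    next
      fix \<gamma> assume "\<And>r. r \<in> C \<Longrightarrow> \<gamma> r \<in> couplings (\<eta> r) (\<zeta> r)"
      thus "WC C \<pi> ?H\<eta> ?H\<zeta> \<le> (\<Sum>r\<in>C. (ennreal \<rho> * ennreal (\<pi> r)) * cost (\<gamma> r))" by (rule key)
    qed
    also have "\<dots> = ennreal \<rho> * WC C \<pi> \<eta> \<zeta>"
      by (simp add: WC_def W1_def cost_def sum_distrib_left mult.assoc)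
    finally show ?thesis .
  qed
  show ?thesis using part1 part2 by blast
qed


end
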